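(* Let $\lambda>0$, $n\ge2$ an integer, and $X_1,\ldots,X_n$ i.i.d. $\mathrm{ZTP}(\lambda)$. Let $\widehat G=\frac{1}{n-1}\cdot\frac{\sum_{1\le i<j\le n}|X_i-X_j|}{\sum_{i=1}^n X_i}$. Then $$\mathbb{E}(\widehat G)=\frac{n\lambda e^{-n\lambda}}{[1-e^{-\lambda}]^n}\int_0^1\big[I_0(2\lambda y)+I_1(2\lambda y)\big]\,[e^{\lambda y}-1]^{n-2}\,dy-\frac{n e^{-\lambda}}{(n-1)[1-e^{-\lambda}]}.$$ Consequently, with $G$ the Gini coefficient of $\mathrm{ZTP}(\lambda)$, $$\mathbb{E}(\widehat G)-G=\frac{n\lambda e^{-n\lambda}}{[1-e^{-\lambda}]^n}\int_0^1\big[I_0(2\lambda y)+I_1(2\lambda y)\big][e^{\lambda y}-1]^{n-2}dy-\frac{n e^{-\lambda}}{(n-1)[1-e^{-\lambda}]}+\frac{2e^{-\lambda}}{1-e^{-\lambda}}\int_0^\lambda I_0(2\sqrt{\lambda t})e^{-t}dt-\frac{e^{-2\lambda}}{1-e^{-\lambda}}I_1(2\lambda)-1.$$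
   Context: $X\sim\mathrm{ZTP}(\lambda)$ means $\mathbb{P}(X=k)=\frac{1}{1-e^{-\lambda}}\frac{e^{-\lambda}\lambda^k}{k!}$ for $k=1,2,\ldots$. The Gini coefficient of a random variable $X$ with finite mean is $G=\frac12\,\mathbb{E}|X_1-X_2|/\mathbb{E}(X)$ with $X_1,X_2$ independent copies of $X$. $I_\nu$ denotes the modified Bessel function of the first kind of order $\nu$. *)

theory Defs
  imports "HOL-Analysis.Analysis" "HOL-Probability.Probability"
begin

definition ztp_pmf :: "real \<Rightarrow> nat pmf" where
  "ztp_pmf l = cond_pmf (poisson_pmf l) {1..}"

definition bessel_I :: "nat \<Rightarrow> real \<Rightarrow> real" where
  "bessel_I nu x = (\<Sum>k. (x / 2) ^ (2 * k + nu) / (fact k * fact (k + nu)))"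

definition gini :: "nat pmf \<Rightarrow> real" where
  "gini p = (1/2) * measure_pmf.expectation (pair_pmf p p) (\<lambda>(a, b). \<bar>real a - real b\<bar>)
             / measure_pmf.expectation p real"

definition gini_hat :: "nat \<Rightarrow> (nat \<Rightarrow> nat) \<Rightarrow> real" where
  "gini_hat n X = 1 / (real n - 1) *
     ((\<Sum>j<n. \<Sum>i<j. \<bar>real (X i) - real (X j)\<bar>) / (\<Sum>i<n. real (X i)))"

end

theory Submission
  imports Defs
begin


lemma ztp_pmf_eq:
  assumes l: "l > 0"
  shows "pmf (ztp_pmf l) k = (if k = 0 then 0 else l ^ k / fact k / (exp l - 1))"
proof -
  have p1: "pmf (poisson_pmf l) 1 > 0" using l by (simp add: pmf_poisson)
  have ne: "set_pmf (poisson_pmf l) \<inter> {1..} \<noteq> {}"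
    using p1 by (auto simp: set_pmf_eq' intro!: exI[of _ 1])
  have "{1::nat..} = UNIV - {0}" by auto
  hence m: "measure_pmf.prob (poisson_pmf l) {1..} = 1 - exp (- l)"
    using l measure_pmf.prob_compl[where M="poisson_pmf l" and A="{0}"]
    by (simp add: measure_pmf_single pmf_poisson)
  have e: "exp (-l) * l ^ k / fact k / (1 - exp (-l)) = l ^ k / fact k / (exp l - 1)"
  proof -
    have "exp l > 1" using l by simp
    moreover have "exp (-l) * exp l = 1" by (simp add: exp_minus)
    ultimately show ?thesis by (simp add: field_simps exp_minus)
  qed
  have c: "pmf (ztp_pmf l) k = (if k \<in> {1..} then pmf (poisson_pmf l) k / measure_pmf.prob (poisson_pmf l) {1..} else 0)"
    unfolding ztp_pmf_def by (rule pmf_cond[OF ne])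
  show ?thesis
    unfolding c m using l e
    by (auto simp: pmf_poisson mult.commute)
qed


lemma ennreal_suminf_swap:
  fixes F :: "nat \<Rightarrow> nat \<Rightarrow> ennreal"
  shows "(\<Sum>a. \<Sum>b. F a b) = (\<Sum>b. \<Sum>a. F a b)"
proof -
  have "(\<Sum>a. \<Sum>b. F a b) = (\<integral>\<^sup>+a. (\<Sum>b. F a b) \<partial>count_space UNIV)"
    by (simp add: nn_integral_count_space_nat)
  also have "\<dots> = (\<Sum>b. \<integral>\<^sup>+a. F a b \<partial>count_space UNIV)"
    by (rule nn_integral_suminf) simp
  also have "\<dots> = (\<Sum>b. \<Sum>a. F a b)"
    by (simp add: nn_integral_count_space_nat)
  finally show ?thesis .
qed

lemma ennreal_suminf_shift:
  fixes g :: "nat \<Rightarrow> ennreal"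
  shows "(\<Sum>m. if a \<le> m then g (m - a) else 0) = (\<Sum>j. g j)"
proof -
  have "(\<Sum>m. if a \<le> m then g (m - a) else 0) =
        (\<Sum>j. (\<lambda>m. if a \<le> m then g (m - a) else 0) (j + a)) + (\<Sum>j<a. (\<lambda>m. if a \<le> m then g (m - a) else 0) j)"
    by (rule suminf_offset) (rule summableI)
  also have "\<dots> = (\<Sum>j. g j)" by simp
  finally show ?thesis .
qed

lemma ennreal_diag:
  fixes F :: "nat \<Rightarrow> nat \<Rightarrow> ennreal"
  shows "(\<Sum>a. \<Sum>b. F a b) = (\<Sum>m. \<Sum>a\<le>m. F a (m - a))"
proof -
  have "(\<Sum>a. \<Sum>b. F a b) = (\<Sum>a. \<Sum>m. if a \<le> m then F a (m - a) else 0)"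
    by (subst ennreal_suminf_shift) simp
  also have "\<dots> = (\<Sum>m. \<Sum>a. if a \<le> m then F a (m - a) else 0)"
    by (rule ennreal_suminf_swap)
  also have "\<dots> = (\<Sum>m. \<Sum>a\<le>m. F a (m - a))"
    by (intro suminf_cong, subst suminf_finite[where N="{..m}" for m]) auto
  finally show ?thesis .
qed

lemma telesc:
  assumes "m \<ge> 1"
  shows "(\<Sum>a\<le>j. (real m - 2 * real a) * real (m choose a)) = real m * real ((m - 1) choose j)"
proof (induction j)
  case 0 then show ?case by simp
next
  case (Suc j)
  obtain m' where m: "m = Suc m'" using assms by (cases m) auto
  have b1: "real (m choose Suc j) = real (m' choose j) + real (m' choose Suc j)"
    unfolding m by simp
  have b2: "real (Suc j) * real (m choose Suc j) = real m * real (m' choose j)"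
  proof -
    have "Suc m' * (m' choose j) = (Suc m' choose Suc j) * Suc j" by (rule Suc_times_binomial_eq)
    then show ?thesis unfolding m by (metis mult.commute of_nat_mult)
  qed
  have "(\<Sum>a\<le>Suc j. (real m - 2 * real a) * real (m choose a))
      = real m * real (m' choose j) + (real m - 2 * real (Suc j)) * real (m choose Suc j)"
    using Suc by (simp add: m)
  also have "\<dots> = real m * real (m' choose Suc j)"
    using b1 b2 by (simp add: algebra_simps)
  finally show ?case by (simp add: m)
qed


lemma absdev:
  assumes m: "m \<ge> 1"
  shows "(\<Sum>a\<le>m. \<bar>real m - 2 * real a\<bar> * real (m choose a))
       = 2 * real m * real ((m - 1) choose ((m - 1) div 2))"
proof -
  define h where "h = (m - 1) div 2"
  have hm: "h \<le> m" unfolding h_def by simp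
  have abs_eq: "\<bar>x\<bar> = 2 * max x 0 - x" for x :: real by auto
  have z: "(\<Sum>a\<le>m. (real m - 2 * real a) * real (m choose a)) = 0"
    using telesc[OF m, of m] m by simp
  have split: "{..m} = {..h} \<union> {h<..m}" using hm by auto
  have "(\<Sum>a\<le>m. max (real m - 2 * real a) 0 * real (m choose a))
      = (\<Sum>a\<le>h. max (real m - 2 * real a) 0 * real (m choose a))
        + (\<Sum>a\<in>{h<..m}. max (real m - 2 * real a) 0 * real (m choose a))"
    unfolding split by (rule sum.union_disjoint) auto
  also have "(\<Sum>a\<in>{h<..m}. max (real m - 2 * real a) 0 * real (m choose a)) = 0"
  proof (rule sum.neutral, safe)
    fix a assume "a \<in> {h<..m}"
    hence "real m \<le> 2 * real a" unfolding h_def by auto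
    thus "max (real m - 2 * real a) 0 * real (m choose a) = 0" by simp
  qed
  also have "(\<Sum>a\<le>h. max (real m - 2 * real a) 0 * real (m choose a))
           = (\<Sum>a\<le>h. (real m - 2 * real a) * real (m choose a))"
  proof (rule sum.cong, simp)
    fix a assume "a \<in> {..h}"
    hence "2 * real a \<le> real m" unfolding h_def by auto
    thus "max (real m - 2 * real a) 0 * real (m choose a) = (real m - 2 * real a) * real (m choose a)" by simp
  qed
  also have "\<dots> = real m * real ((m - 1) choose h)" by (rule telesc[OF m])
  finally have mx: "(\<Sum>a\<le>m. max (real m - 2 * real a) 0 * real (m choose a)) = real m * real ((m - 1) choose h)" by simp
  have "(\<Sum>a\<le>m. \<bar>real m - 2 * real a\<bar> * real (m choose a))
      = 2 * (\<Sum>a\<le>m. max (real m - 2 * real a) 0 * real (m choose a)) - (\<Sum>a\<le>m. (real m - 2 * real a) * real (m choose a))"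
    unfolding sum_distrib_left sum_subtractf[symmetric]
  proof (rule sum.cong)
    fix a
    show "\<bar>real m - 2 * real a\<bar> * real (m choose a) =
          2 * (max (real m - 2 * real a) 0 * real (m choose a)) - (real m - 2 * real a) * real (m choose a)"
      by (cases "real m - 2 * real a \<ge> 0") (auto simp: max_def algebra_simps)
  qed simp
  also have "\<dots> = 2 * real m * real ((m - 1) choose h)" using mx z by simp
  finally show ?thesis unfolding h_def .
qed


lemma aux_cancel: "(c::real) \<noteq> 0 \<Longrightarrow> x * z / y = x * c * z / (y * c)"
  by simp

lemma antidiag:
  fixes z :: real
  shows "(\<Sum>a\<le>m. \<bar>real a - real (m - a)\<bar> * z ^ m / (fact a * fact (m - a)))
       = (if m = 0 then 0 else 2 * real m * real ((m - 1) choose ((m - 1) div 2)) * z ^ m / fact m)"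
proof (cases "m = 0")
  case True then show ?thesis by simp
next
  case False
  have "(\<Sum>a\<le>m. \<bar>real a - real (m - a)\<bar> * z ^ m / (fact a * fact (m - a)))
      = (\<Sum>a\<le>m. \<bar>real m - 2 * real a\<bar> * real (m choose a) * z ^ m / fact m)"
  proof (rule sum.cong)
    fix a assume a: "a \<in> {..m}"
    have "(fact a * fact (m - a) * (m choose a) :: nat) = fact m"
      by (rule binomial_fact_lemma) (use a in simp)
    then have "real (fact a * fact (m - a) * (m choose a)) = real (fact m)" by (rule arg_cong)
    then have F: "fact m = fact a * fact (m - a) * real (m choose a)"
      by (simp only: of_nat_mult of_nat_fact)
    have C: "real (m choose a) > 0" using a by simp
    have "\<bar>real a - real (m - a)\<bar> = \<bar>real m - 2 * real a\<bar>" using a by (auto simp: of_nat_diff)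
    hence "\<bar>real a - real (m - a)\<bar> * z ^ m / (fact a * fact (m - a)) =
         \<bar>real m - 2 * real a\<bar> * z ^ m / (fact a * fact (m - a))" by (simp only:)
    also have "\<dots> = \<bar>real m - 2 * real a\<bar> * real (m choose a) * z ^ m / fact m"
      unfolding F using C by (rule aux_cancel[OF less_imp_neq[symmetric]])
    finally show "\<bar>real a - real (m - a)\<bar> * z ^ m / (fact a * fact (m - a)) =
         \<bar>real m - 2 * real a\<bar> * real (m choose a) * z ^ m / fact m" .
  qed simp
  also have "\<dots> = (\<Sum>a\<le>m. \<bar>real m - 2 * real a\<bar> * real (m choose a)) * z ^ m / fact m"
    by (simp add: sum_distrib_right sum_divide_distrib)
  also have "\<dots> = 2 * real m * real ((m - 1) choose ((m - 1) div 2)) * z ^ m / fact m"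
    using False by (subst absdev) auto
  finally show ?thesis using False by simp
qed


lemma pow_aux: "(y::real) ^ (2 * k + nu) / f = y ^ nu * (inverse f * (y ^ 2) ^ k)"
proof -
  have "(y ^ 2) ^ k = y ^ (2 * k)" by (simp add: power_mult)
  then show ?thesis by (simp add: power_add divide_inverse mult_ac)
qed

lemma odd_aux0: "(A::real) > 0 \<Longrightarrow> B > 0 \<Longrightarrow> N > 0 \<Longrightarrow>
   2 * N * (A / (B * B)) * (z * w) / (N * A) = 2 * z * (w / B ^ 2)"
  by (simp add: field_simps power2_eq_square)

lemma odd_aux: "(A::real) > 0 \<Longrightarrow> B > 0 \<Longrightarrow>
   2 * real (2 * k + 1) * (A / (B * B)) * z ^ (2 * k + 1) / (real (2 * k + 1) * A) = 2 * z * (z ^ (2 * k) / B ^ 2)"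
  using odd_aux0[of A B "real (2 * k + 1)" z "z ^ (2 * k)"] by (simp add: mult.commute)

lemma even_aux0: "(A::real) > 0 \<Longrightarrow> B > 0 \<Longrightarrow> B' > 0 \<Longrightarrow> N > 0 \<Longrightarrow>
   2 * N * (A / (B * B')) * (z * w) / (N * A) = 2 * z * (w / (B * B'))"
  by (simp add: field_simps)

lemma even_aux: "(A::real) > 0 \<Longrightarrow> B > 0 \<Longrightarrow> B' > 0 \<Longrightarrow>
   2 * real (2 * k + 2) * (A / (B * B')) * z ^ (2 * k + 2) / (real (2 * k + 2) * A) = 2 * z * (z ^ (2 * k + 1) / (B * B'))"
  using even_aux0[of A B B' "real (2 * k + 2)" z "z ^ (2 * k + 1)"] by (simp add: mult.commute)

lemma bessel_sums:
  "(\<lambda>k. (x / 2) ^ (2 * k + nu) / (fact k * fact (k + nu))) sums bessel_I nu x"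
proof -
  let ?y = "\<bar>x / 2\<bar>"
  have s: "summable (\<lambda>k. ?y ^ nu * (inverse (fact k) * (?y ^ 2) ^ k))"
    by (intro summable_mult summable_exp)
  have "summable (\<lambda>k. (x / 2) ^ (2 * k + nu) / (fact k * fact (k + nu)))"
  proof (rule summable_comparison_test[OF _ s], intro exI allI impI)
    fix k :: nat
    have f1: "(1::real) \<le> fact (k + nu)" by simp
    have "norm ((x / 2) ^ (2 * k + nu) / (fact k * fact (k + nu)))
        = ?y ^ (2 * k + nu) / (fact k * fact (k + nu))"
      by (simp add: abs_mult power_abs)
    also have "\<dots> \<le> ?y ^ (2 * k + nu) / fact k"
    proof (rule divide_left_mono)
      show "fact k \<le> fact k * (fact (k + nu) :: real)" using f1 by simp
    qed auto
    also have "\<dots> = ?y ^ nu * (inverse (fact k) * (?y ^ 2) ^ k)"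
      by (rule pow_aux)
    finally show "norm ((x / 2) ^ (2 * k + nu) / (fact k * fact (k + nu)))
        \<le> ?y ^ nu * (inverse (fact k) * (?y ^ 2) ^ k)" .
  qed
  then show ?thesis unfolding bessel_I_def by (rule summable_sums)
qed

lemma bessel0_sums: "(\<lambda>k. z ^ (2 * k) / (fact k) ^ 2) sums bessel_I 0 (2 * z)"
  using bessel_sums[of "2 * z" 0] by (simp add: power2_eq_square)

lemma bessel1_sums: "(\<lambda>k. z ^ (2 * k + 1) / (fact k * fact (Suc k))) sums bessel_I 1 (2 * z)"
  using bessel_sums[of "2 * z" 1] by simp

definition tt :: "real \<Rightarrow> nat \<Rightarrow> real" where
  "tt z m = (if m = 0 then 0 else 2 * real m * real ((m - 1) choose ((m - 1) div 2)) * z ^ m / fact m)"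

lemma tt_odd: "tt z (2 * k + 1) = 2 * z * (z ^ (2 * k) / (fact k) ^ 2)"
proof -
  have C: "real ((2 * k) choose k) = fact (2 * k) / (fact k * fact k)"
    by (simp add: binomial_fact)
  have F: "(fact (2 * k + 1) :: real) = real (2 * k + 1) * fact (2 * k)"
    by (metis Suc_eq_plus1 fact_Suc)
  have e: "2 * k + 1 - 1 = 2 * k" "(2 * k) div 2 = k" by auto
  have "tt z (2 * k + 1) = 2 * real (2 * k + 1) * real ((2 * k) choose k) * z ^ (2 * k + 1) / fact (2 * k + 1)"
    unfolding tt_def e by simp
  also have "\<dots> = 2 * real (2 * k + 1) * (fact (2 * k) / (fact k * fact k)) * z ^ (2 * k + 1) / (real (2 * k + 1) * fact (2 * k))"
    unfolding C F ..
  also have "\<dots> = 2 * z * (z ^ (2 * k) / (fact k) ^ 2)"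
    by (rule odd_aux) auto
  finally show ?thesis .
qed

lemma tt_even: "tt z (2 * k + 2) = 2 * z * (z ^ (2 * k + 1) / (fact k * fact (Suc k)))"
proof -
  have C: "real ((2 * k + 1) choose k) = fact (2 * k + 1) / (fact k * fact (Suc k))"
    by (simp add: binomial_fact)
  have F: "(fact (2 * k + 2) :: real) = real (2 * k + 2) * fact (2 * k + 1)"
  proof -
    have "(fact (2 * k + 2) :: real) = fact (Suc (2 * k + 1))" by simp
    also have "\<dots> = of_nat (Suc (2 * k + 1)) * fact (2 * k + 1)" by (rule fact_Suc)
    finally show ?thesis by simp
  qed
  have e: "(2 * k + 2 - 1) = 2 * k + 1" "(2 * k + 1) div 2 = k" by auto
  have "tt z (2 * k + 2) = 2 * real (2 * k + 2) * real ((2 * k + 1) choose k) * z ^ (2 * k + 2) / fact (2 * k + 2)"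
    unfolding tt_def e by simp
  also have "\<dots> = 2 * real (2 * k + 2) * (fact (2 * k + 1) / (fact k * fact (Suc k))) * z ^ (2 * k + 2) / (real (2 * k + 2) * fact (2 * k + 1))"
    unfolding C F ..
  also have "\<dots> = 2 * z * (z ^ (2 * k + 1) / (fact k * fact (Suc k)))"
    by (rule even_aux) auto
  finally show ?thesis .
qed

lemma tt_sums: "tt z sums (2 * z * (bessel_I 0 (2 * z) + bessel_I 1 (2 * z)))"
proof -
  define f where "f k = tt z (2 * k)" for k
  define g where "g k = tt z (2 * k + 1)" for k
  have "(\<lambda>k. f (Suc k)) sums (2 * z * bessel_I 1 (2 * z))"
  proof -
    have "(\<lambda>k. f (Suc k)) = (\<lambda>k. 2 * z * (z ^ (2 * k + 1) / (fact k * fact (Suc k))))"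
      using tt_even by (simp add: f_def fun_eq_iff)
    then show ?thesis using sums_mult[OF bessel1_sums, of "2 * z" z] by simp
  qed
  hence fs: "f sums (2 * z * bessel_I 1 (2 * z))"
    by (subst (asm) sums_Suc_iff) (simp add: f_def tt_def)
  have gs: "g sums (2 * z * bessel_I 0 (2 * z))"
    unfolding g_def tt_odd by (rule sums_mult[OF bessel0_sums])
  have "(\<lambda>n. if even n then f (n div 2) else g ((n - 1) div 2)) sums
        (2 * z * bessel_I 0 (2 * z) + 2 * z * bessel_I 1 (2 * z))"
    by (rule sums_if[OF gs fs])
  also have "(\<lambda>n. if even n then f (n div 2) else g ((n - 1) div 2)) = tt z"
  proof
    fix n :: nat
    show "(if even n then f (n div 2) else g ((n - 1) div 2)) = tt z n"
    proof (cases "even n")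
      case True then show ?thesis by (simp add: f_def)
    next
      case False
      then have "2 * ((n - 1) div 2) + 1 = n" by presburger
      with False show ?thesis by (simp add: g_def)
    qed
  qed
  finally show ?thesis by (simp add: algebra_simps)
qed


lemma tt_nonneg: "z \<ge> 0 \<Longrightarrow> tt z m \<ge> 0"
  unfolding tt_def by simp

lemma DS:
  assumes z: "z \<ge> 0"
  shows "(\<Sum>a. \<Sum>b. ennreal (\<bar>real a - real b\<bar> * z ^ (a + b) / (fact a * fact b)))
       = ennreal (2 * z * (bessel_I 0 (2 * z) + bessel_I 1 (2 * z)))"
proof -
  have "(\<Sum>a. \<Sum>b. ennreal (\<bar>real a - real b\<bar> * z ^ (a + b) / (fact a * fact b)))
      = (\<Sum>m. \<Sum>a\<le>m. ennreal (\<bar>real a - real (m - a)\<bar> * z ^ (a + (m - a)) / (fact a * fact (m - a))))"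
    by (rule ennreal_diag)
  also have "\<dots> = (\<Sum>m. ennreal (tt z m))"
  proof (rule suminf_cong)
    fix m
    have "(\<Sum>a\<le>m. ennreal (\<bar>real a - real (m - a)\<bar> * z ^ (a + (m - a)) / (fact a * fact (m - a))))
        = (\<Sum>a\<le>m. ennreal (\<bar>real a - real (m - a)\<bar> * z ^ m / (fact a * fact (m - a))))"
      by (rule sum.cong) auto
    also have "\<dots> = ennreal (\<Sum>a\<le>m. \<bar>real a - real (m - a)\<bar> * z ^ m / (fact a * fact (m - a)))"
      using z by (intro sum_ennreal) auto
    also have "\<dots> = ennreal (tt z m)" unfolding antidiag tt_def ..
    finally show "(\<Sum>a\<le>m. ennreal (\<bar>real a - real (m - a)\<bar> * z ^ (a + (m - a)) / (fact a * fact (m - a))))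
        = ennreal (tt z m)" .
  qed
  also have "\<dots> = ennreal (2 * z * (bessel_I 0 (2 * z) + bessel_I 1 (2 * z)))"
    using z by (intro suminf_ennreal_eq tt_sums tt_nonneg)
  finally show ?thesis .
qed

lemma bessel_comb_nonneg:
  assumes z: "z \<ge> 0"
  shows "2 * z * (bessel_I 0 (2 * z) + bessel_I 1 (2 * z)) \<ge> 0"
  using sums_le[of "\<lambda>_. 0" "tt z" 0, OF _ sums_zero tt_sums] tt_nonneg[OF z] by auto

lemma zexp_sums: "(\<lambda>b. real b * z ^ b / fact b) sums (z * exp z)"
proof -
  have "(\<lambda>b. z * (z ^ b / fact b)) sums (z * exp z)"
    using sums_mult[OF exp_converges[of z], of z] by (simp add: divide_inverse mult_ac)
  moreover have "(\<lambda>b. real (Suc b) * z ^ (Suc b) / fact (Suc b)) = (\<lambda>b. z * (z ^ b / fact b))"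
  proof
    fix b
    have F: "(fact (Suc b) :: real) = real (Suc b) * fact b" by (rule fact_Suc)
    have "real (Suc b) > 0" "(fact b :: real) > 0" by auto
    then show "real (Suc b) * z ^ (Suc b) / fact (Suc b) = z * (z ^ b / fact b)"
      unfolding F by simp
  qed
  ultimately have "(\<lambda>b. (\<lambda>b. real b * z ^ b / fact b) (Suc b)) sums (z * exp z)" by simp
  then show ?thesis by (subst (asm) sums_Suc_iff) simp
qed

definition Qz :: "real \<Rightarrow> real" where
  "Qz z = 2 * z * (bessel_I 0 (2 * z) + bessel_I 1 (2 * z)) - 2 * z * exp z"

lemma DS1:
  assumes z: "z \<ge> 0"
  shows "(\<Sum>a. \<Sum>b. ennreal (if a = 0 \<or> b = 0 then 0 else \<bar>real a - real b\<bar> * z ^ (a + b) / (fact a * fact b)))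
       = ennreal (Qz z)" (is "?X = _")
    and "Qz z \<ge> 0"
proof -
  define f where "f a b = \<bar>real a - real b\<bar> * z ^ (a + b) / (fact a * fact b)" for a b :: nat
  define g where "g b = real b * z ^ b / fact b" for b :: nat
  have f1: "ennreal (f a b) = ennreal (if a = 0 \<or> b = 0 then 0 else f a b)
        + ((if a = 0 then ennreal (g b) else 0) + (if b = 0 then ennreal (g a) else 0))" for a b
    by (auto simp: f_def g_def)
  have gs: "(\<Sum>b. ennreal (g b)) = ennreal (z * exp z)"
    unfolding g_def using z by (intro suminf_ennreal_eq zexp_sums) auto
  have sum1: "(\<Sum>a. \<Sum>b. (if a = 0 then ennreal (g b) else 0)) = ennreal (z * exp z)"
  proof -
    have "(\<Sum>a. \<Sum>b. (if a = 0 then ennreal (g b) else 0)) = (\<Sum>a. if a = 0 then (\<Sum>b. ennreal (g b)) else 0)"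
      by (intro suminf_cong) auto
    also have "\<dots> = (\<Sum>b. ennreal (g b))" by (subst suminf_finite[of "{0}"]) auto
    finally show ?thesis using gs by simp
  qed
  have sum2: "(\<Sum>a. \<Sum>b. (if b = 0 then ennreal (g a) else 0)) = ennreal (z * exp z)"
  proof -
    have "(\<Sum>a. \<Sum>b. (if b = 0 then ennreal (g a) else 0)) = (\<Sum>a. ennreal (g a))"
      by (intro suminf_cong) (subst suminf_finite[of "{0}"], auto)
    then show ?thesis using gs by simp
  qed
  have "ennreal (2 * z * (bessel_I 0 (2 * z) + bessel_I 1 (2 * z))) = (\<Sum>a. \<Sum>b. ennreal (f a b))"
    using DS[OF z] by (simp add: f_def)
  also have "\<dots> = (\<Sum>a. (\<Sum>b. ennreal (if a = 0 \<or> b = 0 then 0 else f a b))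
        + (\<Sum>b. ((if a = 0 then ennreal (g b) else 0) + (if b = 0 then ennreal (g a) else 0))))"
    unfolding f1 by (intro suminf_cong suminf_add[symmetric] summableI)
  also have "\<dots> = (\<Sum>a. \<Sum>b. ennreal (if a = 0 \<or> b = 0 then 0 else f a b)) + (\<Sum>a. \<Sum>b. ((if a = 0 then ennreal (g b) else 0) + (if b = 0 then ennreal (g a) else 0)))"
    by (rule suminf_add[symmetric]) (rule summableI)+
  also have "(\<Sum>a. \<Sum>b. ((if a = 0 then ennreal (g b) else 0) + (if b = 0 then ennreal (g a) else 0)))
      = (\<Sum>a. \<Sum>b. (if a = 0 then ennreal (g b) else 0)) + (\<Sum>a. \<Sum>b. (if b = 0 then ennreal (g a) else 0))"
    by (subst suminf_add[symmetric], (rule summableI)+, subst suminf_add, (rule summableI)+, rule refl)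
  also have "\<dots> = ennreal (2 * z * exp z)"
    unfolding sum1 sum2 using z by (simp flip: ennreal_plus)
  finally have eq0: "ennreal (2 * z * (bessel_I 0 (2 * z) + bessel_I 1 (2 * z))) =
     (\<Sum>a. \<Sum>b. ennreal (if a = 0 \<or> b = 0 then 0 else f a b)) + ennreal (2 * z * exp z)" .
  have Xf: "?X = (\<Sum>a. \<Sum>b. ennreal (if a = 0 \<or> b = 0 then 0 else f a b))"
    unfolding f_def by (rule refl)
  have eq: "ennreal (2 * z * (bessel_I 0 (2 * z) + bessel_I 1 (2 * z))) = ?X + ennreal (2 * z * exp z)"
    unfolding Xf by (rule eq0)
  have A0: "2 * z * (bessel_I 0 (2 * z) + bessel_I 1 (2 * z)) \<ge> 0" by (rule bessel_comb_nonneg[OF z])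
  have "ennreal (2 * z * exp z) \<le> ennreal (2 * z * (bessel_I 0 (2 * z) + bessel_I 1 (2 * z)))"
    unfolding eq by simp
  hence le: "2 * z * exp z \<le> 2 * z * (bessel_I 0 (2 * z) + bessel_I 1 (2 * z))"
    using A0 by (simp add: ennreal_le_iff)
  then show "Qz z \<ge> 0" unfolding Qz_def by simp
  have "?X = ennreal (2 * z * (bessel_I 0 (2 * z) + bessel_I 1 (2 * z))) - ennreal (2 * z * exp z)"
    unfolding eq by (simp add: ennreal_add_diff_cancel_right)
  also have "\<dots> = ennreal (Qz z)" unfolding Qz_def using z by (simp add: ennreal_minus)
  finally show "?X = ennreal (Qz z)" .
qed


lemma nn_integral_pmf_nat: "(\<integral>\<^sup>+k. f k \<partial>measure_pmf p) = (\<Sum>k. ennreal (pmf p (k::nat)) * f k)"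
  by (simp add: nn_integral_measure_pmf nn_integral_count_space_nat)

lemma exp_minus1_sums: fixes x :: real shows "(\<lambda>k. if k = 0 then 0 else x ^ k / fact k) sums (exp x - 1)"
proof -
  have "(\<lambda>k. x ^ k / fact k - (if k = 0 then x ^ k / fact k else 0)) sums (exp x - x ^ 0 / fact 0)"
    using sums_diff[OF exp_converges[of x] sums_single[of 0 "\<lambda>k. x ^ k / fact k"]]
    by (simp add: real_scaleR_def divide_inverse mult_ac)
  moreover have "(\<lambda>k. x ^ k / fact k - (if k = 0 then x ^ k / fact k else 0)) = (\<lambda>k. if k = 0 then 0 else x ^ k / fact k)"
    by auto
  ultimately show ?thesis by simp
qed

lemma gfun:
  assumes l: "l > 0" and y: "y \<ge> 0"
  shows "(\<integral>\<^sup>+k. ennreal (y ^ k) \<partial>ztp_pmf l) = ennreal ((exp (l * y) - 1) / (exp l - 1))"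
proof -
  have el: "exp l - 1 > 0" using l by simp
  have "(\<integral>\<^sup>+k. ennreal (y ^ k) \<partial>ztp_pmf l) = (\<Sum>k. ennreal ((if k = 0 then 0 else (l * y) ^ k / fact k) / (exp l - 1)))"
    unfolding nn_integral_pmf_nat
  proof (rule suminf_cong)
    fix k
    show "ennreal (pmf (ztp_pmf l) k) * ennreal (y ^ k) = ennreal ((if k = 0 then 0 else (l * y) ^ k / fact k) / (exp l - 1))"
      using l y el by (cases "k = 0") (simp_all add: ztp_pmf_eq[OF l] power_mult_distrib flip: ennreal_mult)
  qed
  also have "\<dots> = ennreal ((exp (l * y) - 1) / (exp l - 1))"
    using l y el by (intro suminf_ennreal_eq sums_divide exp_minus1_sums) auto
  finally show ?thesis .
qed

lemma meanfun:
  assumes l: "l > 0"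
  shows "(\<integral>\<^sup>+k. ennreal (real k) \<partial>ztp_pmf l) = ennreal (l * exp l / (exp l - 1))"
proof -
  have el: "exp l - 1 > 0" using l by simp
  have "(\<integral>\<^sup>+k. ennreal (real k) \<partial>ztp_pmf l) = (\<Sum>k. ennreal ((real k * l ^ k / fact k) / (exp l - 1)))"
    unfolding nn_integral_pmf_nat
  proof (rule suminf_cong)
    fix k
    show "ennreal (pmf (ztp_pmf l) k) * ennreal (real k) = ennreal ((real k * l ^ k / fact k) / (exp l - 1))"
      using l el by (cases "k = 0") (simp_all add: ztp_pmf_eq[OF l] mult_ac flip: ennreal_mult)
  qed
  also have "\<dots> = ennreal (l * exp l / (exp l - 1))"
    using l el by (intro suminf_ennreal_eq sums_divide zexp_sums) auto
  finally show ?thesis .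
qed

lemma Mfun:
  assumes l: "l > 0" and y: "y \<ge> 0"
  shows "(\<integral>\<^sup>+a. \<integral>\<^sup>+b. ennreal (\<bar>real a - real b\<bar> * y ^ a * y ^ b) \<partial>ztp_pmf l \<partial>ztp_pmf l)
       = ennreal (Qz (l * y) / (exp l - 1) ^ 2)"
proof -
  have el: "exp l - 1 > 0" using l by simp
  define K where "K = 1 / (exp l - 1) ^ 2"
  have K: "K \<ge> 0" unfolding K_def using el by simp
  define F where "F a b = (if a = 0 \<or> b = 0 then 0 else \<bar>real a - real b\<bar> * (l * y) ^ (a + b) / (fact a * fact b))" for a b :: nat
  have F0: "F a b \<ge> 0" for a b unfolding F_def using l y by simp
  have "(\<integral>\<^sup>+a. \<integral>\<^sup>+b. ennreal (\<bar>real a - real b\<bar> * y ^ a * y ^ b) \<partial>ztp_pmf l \<partial>ztp_pmf l)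
      = (\<Sum>a. \<Sum>b. ennreal K * ennreal (F a b))"
    unfolding nn_integral_pmf_nat ennreal_suminf_cmult[symmetric]
  proof (intro suminf_cong)
    fix a b
    have "pmf (ztp_pmf l) a * (pmf (ztp_pmf l) b * (\<bar>real a - real b\<bar> * y ^ a * y ^ b)) = K * F a b"
      using el unfolding ztp_pmf_eq[OF l] K_def F_def
      by (auto simp: power_add power_mult_distrib field_simps power2_eq_square)
    moreover have "pmf (ztp_pmf l) b * (\<bar>real a - real b\<bar> * y ^ a * y ^ b) \<ge> 0" using y by simp
    moreover have "ennreal (pmf (ztp_pmf l) b * (\<bar>real a - real b\<bar> * y ^ a * y ^ b))
        = ennreal (pmf (ztp_pmf l) b) * ennreal (\<bar>real a - real b\<bar> * y ^ a * y ^ b)"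
      by (rule ennreal_mult) (use y in auto)
    moreover have "ennreal (pmf (ztp_pmf l) a * (pmf (ztp_pmf l) b * (\<bar>real a - real b\<bar> * y ^ a * y ^ b)))
        = ennreal (pmf (ztp_pmf l) a) * ennreal (pmf (ztp_pmf l) b * (\<bar>real a - real b\<bar> * y ^ a * y ^ b))"
      by (rule ennreal_mult) (use y in auto)
    moreover have "ennreal (K * F a b) = ennreal K * ennreal (F a b)" by (rule ennreal_mult[OF K F0])
    ultimately show "ennreal (pmf (ztp_pmf l) a) * (ennreal (pmf (ztp_pmf l) b) * ennreal (\<bar>real a - real b\<bar> * y ^ a * y ^ b))
        = ennreal K * ennreal (F a b)"
      by metis
  qed
  also have "\<dots> = ennreal K * (\<Sum>a. \<Sum>b. ennreal (F a b))"
    by (simp add: ennreal_suminf_cmult)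
  also have "(\<Sum>a. \<Sum>b. ennreal (F a b)) = ennreal (Qz (l * y))"
    unfolding F_def by (rule DS1) (use l y in simp)
  also have "ennreal K * ennreal (Qz (l * y)) = ennreal (Qz (l * y) / (exp l - 1) ^ 2)"
  proof -
    have Q0: "Qz (l * y) \<ge> 0" by (rule DS1(2)) (use l y in simp)
    show ?thesis using ennreal_mult[OF K Q0] by (simp add: K_def)
  qed
  finally show ?thesis .
qed


lemma pair_term:
  fixes q :: "nat pmf" and y :: real and i j :: nat
  assumes I: "finite I" "i \<in> I" "j \<in> I" "i \<noteq> j"
  shows "(\<integral>\<^sup>+x. ennreal \<bar>real (x i) - real (x j)\<bar> * (\<Prod>k\<in>I. ennreal (y ^ x k)) \<partial>Pi_pmf I 0 (\<lambda>_. q))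
    = (\<integral>\<^sup>+a. \<integral>\<^sup>+b. ennreal \<bar>real a - real b\<bar> * ennreal (y ^ a) * ennreal (y ^ b) \<partial>q \<partial>q)
      * (\<integral>\<^sup>+k. ennreal (y ^ k) \<partial>q) ^ (card I - 2)"
proof -
  define R where "R = I - {i, j}"
  have R: "finite R" "i \<notin> insert j R" "j \<notin> R" "I = insert i (insert j R)"
    using I by (auto simp: R_def)
  have cR: "card R = card I - 2" using I by (simp add: R_def card_Diff_subset)
  define H where "H x = ennreal \<bar>real (x i) - real (x j)\<bar> * (\<Prod>k\<in>I. ennreal (y ^ x k))" for x :: "nat \<Rightarrow> nat"
  define G where "G = (\<integral>\<^sup>+k. ennreal (y ^ k) \<partial>q)"
  have eqH: "H ((h(j := b))(i := a)) = (ennreal \<bar>real a - real b\<bar> * ennreal (y ^ a) * ennreal (y ^ b))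
        * (\<Prod>k\<in>R. ennreal (y ^ h k))" for a b h
  proof -
    have "(\<Prod>k\<in>I. ennreal (y ^ ((h(j := b))(i := a)) k))
        = ennreal (y ^ a) * (ennreal (y ^ b) * (\<Prod>k\<in>R. ennreal (y ^ ((h(j := b))(i := a)) k)))"
      unfolding R(4) using R by (simp add: prod.insert)
    also have "(\<Prod>k\<in>R. ennreal (y ^ ((h(j := b))(i := a)) k)) = (\<Prod>k\<in>R. ennreal (y ^ h k))"
      using R by (intro prod.cong) auto
    finally have P: "(\<Prod>k\<in>I. ennreal (y ^ ((h(j := b))(i := a)) k))
        = ennreal (y ^ a) * (ennreal (y ^ b) * (\<Prod>k\<in>R. ennreal (y ^ h k)))" .
    have xi: "((h(j := b))(i := a)) i = a" by simp
    have xj: "((h(j := b))(i := a)) j = b" using I by simp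
    show ?thesis unfolding H_def xi xj P by (simp only: ac_simps)
  qed
  have inner: "(\<integral>\<^sup>+h. H ((h(j := b))(i := a)) \<partial>Pi_pmf R 0 (\<lambda>_. q))
        = (ennreal \<bar>real a - real b\<bar> * ennreal (y ^ a) * ennreal (y ^ b)) * G ^ (card I - 2)" for a b
  proof -
    have "(\<integral>\<^sup>+h. H ((h(j := b))(i := a)) \<partial>Pi_pmf R 0 (\<lambda>_. q))
        = (ennreal \<bar>real a - real b\<bar> * ennreal (y ^ a) * ennreal (y ^ b)) * (\<integral>\<^sup>+h. (\<Prod>k\<in>R. ennreal (y ^ h k)) \<partial>Pi_pmf R 0 (\<lambda>_. q))"
      unfolding eqH by (rule nn_integral_cmult) simp
    also have "(\<integral>\<^sup>+h. (\<Prod>k\<in>R. ennreal (y ^ h k)) \<partial>Pi_pmf R 0 (\<lambda>_. q)) = (\<Prod>k\<in>R. G)"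
      unfolding G_def by (rule nn_integral_prod_Pi_pmf[OF R(1)])
    also have "\<dots> = G ^ (card I - 2)" using cR by simp
    finally show ?thesis .
  qed
  have "(\<integral>\<^sup>+x. H x \<partial>Pi_pmf I 0 (\<lambda>_. q))
      = (\<integral>\<^sup>+a. \<integral>\<^sup>+b. \<integral>\<^sup>+h. H ((h(j := b))(i := a)) \<partial>Pi_pmf R 0 (\<lambda>_. q) \<partial>q \<partial>q)"
    unfolding R(4) using R
    by (simp add: Pi_pmf_insert[of "insert j R"] Pi_pmf_insert[of R] nn_integral_pair_pmf' case_prod_unfold)
  also have "\<dots> = (\<integral>\<^sup>+a. \<integral>\<^sup>+b. (ennreal \<bar>real a - real b\<bar> * ennreal (y ^ a) * ennreal (y ^ b)) * G ^ (card I - 2) \<partial>q \<partial>q)"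
    unfolding inner ..
  also have "\<dots> = (\<integral>\<^sup>+a. \<integral>\<^sup>+b. ennreal \<bar>real a - real b\<bar> * ennreal (y ^ a) * ennreal (y ^ b) \<partial>q \<partial>q) * G ^ (card I - 2)"
    by (simp add: nn_integral_multc)
  finally show ?thesis unfolding H_def G_def .
qed


definition Ek :: "nat \<Rightarrow> real \<Rightarrow> real" where
  "Ek k t = (\<Sum>j\<le>k. t ^ j / fact j)"

lemma Ek_deriv: "(Ek k has_real_derivative (Ek k t - t ^ k / fact k)) (at t)"
proof (induction k)
  case 0
  have "Ek 0 = (\<lambda>_. 1)" by (auto simp: Ek_def fun_eq_iff)
  then show ?case by simp
next
  case (Suc k)
  have e: "Ek (Suc k) = (\<lambda>t. Ek k t + t ^ Suc k / fact (Suc k))"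
    by (auto simp: Ek_def fun_eq_iff)
  have d: "((\<lambda>t. t ^ Suc k / fact (Suc k)) has_real_derivative (t ^ k / fact k)) (at t)"
  proof -
    have "((\<lambda>t. t ^ Suc k) has_real_derivative (real (Suc k) * t ^ k)) (at t)"
      using DERIV_pow[of "Suc k" t] by simp
    then have "((\<lambda>t. t ^ Suc k / fact (Suc k)) has_real_derivative (real (Suc k) * t ^ k / fact (Suc k))) (at t)"
      by (rule DERIV_cdivide)
    moreover have "real (Suc k) * t ^ k / fact (Suc k) = t ^ k / fact k"
    proof -
      have F: "(fact (Suc k) :: real) = real (Suc k) * fact k" by (rule fact_Suc)
      have "real (Suc k) > 0" "(fact k :: real) > 0" by auto
      then show ?thesis unfolding F by simp
    qed
    ultimately show ?thesis by simp
  qed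
  have "(Ek (Suc k) has_real_derivative ((Ek k t - t ^ k / fact k) + t ^ k / fact k)) (at t)"
    unfolding e by (rule DERIV_add[OF Suc d])
  moreover have "(Ek k t - t ^ k / fact k) + t ^ k / fact k = Ek (Suc k) t - t ^ Suc k / fact (Suc k)"
    using e by (simp add: fun_eq_iff)
  ultimately show ?case by simp
qed

lemma Fk_deriv: "((\<lambda>t. - fact k * exp (- t) * Ek k t) has_real_derivative (t ^ k * exp (- t))) (at t)"
proof -
  have "((\<lambda>t. - fact k * exp (- t) * Ek k t) has_real_derivative
        (- fact k * (exp (- t) * (- 1)) * Ek k t + (- fact k * exp (- t)) * (Ek k t - t ^ k / fact k))) (at t)"
  proof -
    have e: "((\<lambda>t. - fact k * exp (- t)) has_real_derivative (- fact k * (exp (- t) * (- 1)))) (at t)"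
      by (intro DERIV_cmult DERIV_chain2[OF DERIV_exp] derivative_eq_intros) auto
    show ?thesis using DERIV_mult[OF e Ek_deriv[of k t]] by (simp add: mult.commute)
  qed
  moreover have "- fact k * (exp (- t) * (- 1)) * Ek k t + (- fact k * exp (- t)) * (Ek k t - t ^ k / fact k)
      = t ^ k * exp (- t)"
    by (simp add: algebra_simps)
  ultimately show ?thesis by simp
qed

lemma Ek_0: "Ek k 0 = 1"
  unfolding Ek_def by (induction k) auto

lemma Ek_le: "t \<ge> 0 \<Longrightarrow> Ek k t \<le> exp t"
proof -
  assume t: "t \<ge> 0"
  have s: "(\<lambda>j. t ^ j / fact j) sums exp t"
    using exp_converges[of t] by (simp add: real_scaleR_def divide_inverse mult_ac)
  have "Ek k t = (\<Sum>j<Suc k. t ^ j / fact j)" unfolding Ek_def by (simp add: lessThan_Suc_atMost)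
  also have "\<dots> \<le> exp t"
    using sum_le_suminf[OF sums_summable[OF s], of "{..<Suc k}"] t sums_unique[OF s] by auto
  finally show ?thesis .
qed

lemma gamma_int:
  assumes l: "l \<ge> 0"
  shows "(\<integral>\<^sup>+t. ennreal (t ^ k * exp (- t)) * indicator {0..l} t \<partial>lborel)
       = ennreal (fact k * (1 - exp (- l) * Ek k l))"
proof -
  have "(\<integral>\<^sup>+t. ennreal (t ^ k * exp (- t)) * indicator {0..l} t \<partial>lborel)
      = ennreal ((- fact k * exp (- l) * Ek k l) - (- fact k * exp (- 0) * Ek k 0))"
    by (rule nn_integral_FTC_Icc[where F="\<lambda>t. - fact k * exp (- t) * Ek k t"])
       (use l Fk_deriv in auto)
  also have "(- fact k * exp (- l) * Ek k l) - (- fact k * exp (- 0) * Ek k 0) = fact k * (1 - exp (- l) * Ek k l)"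
    by (simp add: Ek_0 algebra_simps)
  finally show ?thesis .
qed


lemma sums_from_ennreal:
  assumes f: "\<And>i. 0 \<le> f i" and x: "x \<ge> 0" and e: "(\<Sum>i. ennreal (f i)) = ennreal x"
  shows "f sums x"
proof -
  have s: "summable f" using summable_suminf_not_top[OF f] e by simp
  have "ennreal (suminf f) = ennreal x" using suminf_ennreal2[OF f s] e by simp
  hence "suminf f = x" using x suminf_nonneg[OF s f] by (simp add: ennreal_inj)
  then show ?thesis using summable_sums[OF s] by simp
qed

lemma T_sums:
  assumes l: "l \<ge> 0"
  shows "(\<lambda>k. l ^ k / fact k * Ek k l) sums ((exp l * exp l + bessel_I 0 (2 * l)) / 2)"
proof -
  define a where "a k = l ^ k / fact k" for k :: nat
  have a0: "a k \<ge> 0" for k unfolding a_def using l by simp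
  have as: "a sums exp l"
    unfolding a_def using exp_converges[of l] by (simp add: real_scaleR_def divide_inverse mult_ac)
  have Ea: "Ek k l = (\<Sum>j\<le>k. a j)" for k unfolding Ek_def a_def ..
  define TT where "TT = (\<Sum>k. ennreal (a k * Ek k l))"
  have TT1: "TT = (\<Sum>k. \<Sum>j. ennreal (if j \<le> k then a k * a j else 0))"
    unfolding TT_def
  proof (rule suminf_cong)
    fix k
    have "ennreal (a k * Ek k l) = (\<Sum>j\<le>k. ennreal (a k * a j))"
      unfolding Ea sum_distrib_left using a0 by (simp add: sum_ennreal)
    also have "\<dots> = (\<Sum>j. ennreal (if j \<le> k then a k * a j else 0))"
      by (subst suminf_finite[of "{..k}"]) auto
    finally show "ennreal (a k * Ek k l) = (\<Sum>j. ennreal (if j \<le> k then a k * a j else 0))" .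
  qed
  have TT2: "TT = (\<Sum>k. \<Sum>j. ennreal (if k \<le> j then a k * a j else 0))"
    unfolding TT1 by (subst ennreal_suminf_swap) (rule suminf_cong, rule suminf_cong, simp add: mult.commute)
  have sq: "(\<Sum>k. ennreal (a k * a k)) = ennreal (bessel_I 0 (2 * l))"
  proof (rule suminf_ennreal_eq)
    show "(\<lambda>k. a k * a k) sums bessel_I 0 (2 * l)"
      using bessel0_sums[of l] by (simp add: a_def power_mult power2_eq_square power_mult_distrib)
  qed (use a0 in auto)
  have full: "(\<Sum>k. \<Sum>j. ennreal (a k * a j)) = ennreal (exp l * exp l)"
  proof -
    have "(\<Sum>k. \<Sum>j. ennreal (a k * a j)) = (\<Sum>k. ennreal (a k) * (\<Sum>j. ennreal (a j)))"
      using a0 by (simp add: ennreal_mult flip: ennreal_suminf_cmult)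
    also have "(\<Sum>j. ennreal (a j)) = ennreal (exp l)" using a0 as by (rule suminf_ennreal_eq)
    also have "(\<Sum>k. ennreal (a k) * ennreal (exp l)) = (\<Sum>k. ennreal (a k)) * ennreal (exp l)"
      by (rule ennreal_suminf_multc)
    also have "(\<Sum>k. ennreal (a k)) = ennreal (exp l)" using a0 as by (rule suminf_ennreal_eq)
    finally show ?thesis by (simp add: ennreal_mult)
  qed
  have "TT + TT = (\<Sum>k. (\<Sum>j. ennreal (if j \<le> k then a k * a j else 0)) + (\<Sum>j. ennreal (if k \<le> j then a k * a j else 0)))"
    unfolding TT1 by (subst (2) TT1[symmetric], subst TT2, subst suminf_add) (auto intro: summableI)
  also have "\<dots> = (\<Sum>k. (\<Sum>j. ennreal (a k * a j)) + (\<Sum>j. if j = k then ennreal (a k * a j) else 0))"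
  proof (rule suminf_cong)
    fix k
    have "(\<Sum>j. ennreal (if j \<le> k then a k * a j else 0)) + (\<Sum>j. ennreal (if k \<le> j then a k * a j else 0))
        = (\<Sum>j. ennreal (if j \<le> k then a k * a j else 0) + ennreal (if k \<le> j then a k * a j else 0))"
      by (rule suminf_add) (auto intro: summableI)
    also have "\<dots> = (\<Sum>j. ennreal (a k * a j) + (if j = k then ennreal (a k * a j) else 0))"
      by (rule suminf_cong) auto
    also have "\<dots> = (\<Sum>j. ennreal (a k * a j)) + (\<Sum>j. if j = k then ennreal (a k * a j) else 0)"
      by (rule suminf_add[symmetric]) (auto intro: summableI)
    finally show "(\<Sum>j. ennreal (if j \<le> k then a k * a j else 0)) + (\<Sum>j. ennreal (if k \<le> j then a k * a j else 0))
        = (\<Sum>j. ennreal (a k * a j)) + (\<Sum>j. if j = k then ennreal (a k * a j) else 0)" .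
  qed
  also have "\<dots> = (\<Sum>k. \<Sum>j. ennreal (a k * a j)) + (\<Sum>k. \<Sum>j. if j = k then ennreal (a k * a j) else 0)"
    by (rule suminf_add[symmetric]) (auto intro: summableI)
  also have "(\<Sum>k. \<Sum>j. if j = k then ennreal (a k * a j) else 0) = (\<Sum>k. ennreal (a k * a k))"
    by (intro suminf_cong, subst suminf_finite[of "{k}" for k]) auto
  finally have X: "TT + TT = ennreal (exp l * exp l) + ennreal (bessel_I 0 (2 * l))"
    unfolding full sq .
  have B0: "bessel_I 0 (2 * l) \<ge> 0"
    using sums_le[of "\<lambda>_. 0" _ 0, OF _ sums_zero bessel0_sums[of l]] by auto
  have TT2x: "TT + TT = ennreal (exp l * exp l + bessel_I 0 (2 * l))"
    unfolding X by (subst ennreal_plus) (use B0 in auto)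
  moreover have "TT \<noteq> top" using calculation by (metis ennreal_add_eq_top ennreal_neq_top)
  ultimately obtain r where r: "TT = ennreal r" "r \<ge> 0" by (cases TT rule: ennreal_cases) auto
  have "ennreal (2 * r) = ennreal (exp l * exp l + bessel_I 0 (2 * l))"
    using TT2x r by (simp add: ennreal_plus[symmetric] del: ennreal_plus)
  hence r2: "2 * r = exp l * exp l + bessel_I 0 (2 * l)"
    using r B0 by (subst (asm) ennreal_inj) (auto intro: add_nonneg_nonneg)
  show ?thesis
  proof (rule sums_from_ennreal)
    show "(\<Sum>k. ennreal (l ^ k / fact k * Ek k l)) = ennreal ((exp l * exp l + bessel_I 0 (2 * l)) / 2)"
      using r r2 unfolding TT_def a_def by simp
    show "0 \<le> l ^ k / fact k * Ek k l" for k
    proof -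
      have "Ek k l \<ge> 0" unfolding Ek_def using l by (auto intro!: sum_nonneg)
      then show ?thesis using l by simp
    qed
    show "0 \<le> (exp l * exp l + bessel_I 0 (2 * l)) / 2" using B0 by (simp add: add_nonneg_nonneg)
  qed
qed


lemma bessel_measurable[measurable]: "bessel_I nu \<in> borel_measurable borel"
  unfolding bessel_I_def by measurable

lemma K_int:
  assumes l: "l > 0"
  shows "integral {0..l} (\<lambda>t. bessel_I 0 (2 * sqrt (l * t)) * exp (- t))
       = (exp l - exp (- l) * bessel_I 0 (2 * l)) / 2"
proof -
  define f where "f t = bessel_I 0 (2 * sqrt (l * t)) * exp (- t)" for t
  define c where "c k = l ^ k / (fact k)\<^sup>2" for k :: nat
  have c0: "c k \<ge> 0" for k unfolding c_def using l by simp
  have fs: "(\<lambda>k. c k * (t ^ k * exp (- t))) sums f t" if t: "t \<ge> 0" for t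
  proof -
    have "(\<lambda>k. sqrt (l * t) ^ (2 * k) / (fact k)\<^sup>2 * exp (- t)) sums f t"
      unfolding f_def by (rule sums_mult2[OF bessel0_sums])
    moreover have "sqrt (l * t) ^ (2 * k) = l ^ k * t ^ k" for k
      using l t by (simp add: power_mult power_mult_distrib)
    ultimately show ?thesis by (simp add: c_def mult_ac)
  qed
  have f0: "f t \<ge> 0" if "t \<ge> 0" for t
    using sums_le[of "\<lambda>_. 0" _ 0, OF _ sums_zero fs[OF that]] c0 that by auto
  define a where "a k = l ^ k / fact k" for k :: nat
  define w where "w k = a k - exp (- l) * (a k * Ek k l)" for k
  have w0: "w k \<ge> 0" for k
  proof -
    have "exp (- l) * Ek k l \<le> exp (- l) * exp l" using Ek_le[of l k] l by simp
    also have "\<dots> = 1" by (simp add: exp_minus)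
    finally have "exp (- l) * (a k * Ek k l) \<le> a k" using l
      by (metis a_def divide_nonneg_pos fact_gt_zero less_imp_le mult.left_commute mult_left_le zero_le_power)
    then show ?thesis unfolding w_def by simp
  qed
  have as: "a sums exp l"
    unfolding a_def using exp_converges[of l] by (simp add: real_scaleR_def divide_inverse mult_ac)
  define K0 where "K0 = exp l - exp (- l) * ((exp l * exp l + bessel_I 0 (2 * l)) / 2)"
  have ws: "w sums K0"
    unfolding w_def K0_def
    by (intro sums_diff as sums_mult) (use T_sums[of l] l in \<open>simp add: a_def\<close>)
  have K0: "K0 = (exp l - exp (- l) * bessel_I 0 (2 * l)) / 2"
    unfolding K0_def by (simp add: exp_minus field_simps)
  have "(\<integral>\<^sup>+t. ennreal (indicator {0..l} t * f t) \<partial>lborel)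
      = (\<integral>\<^sup>+t. (\<Sum>k. ennreal (c k) * (ennreal (t ^ k * exp (- t)) * indicator {0..l} t)) \<partial>lborel)"
  proof (rule nn_integral_cong)
    fix t :: real
    show "ennreal (indicator {0..l} t * f t) = (\<Sum>k. ennreal (c k) * (ennreal (t ^ k * exp (- t)) * indicator {0..l} t))"
    proof (cases "t \<in> {0..l}")
      case True
      then have t: "t \<ge> 0" by simp
      have "ennreal (f t) = (\<Sum>k. ennreal (c k * (t ^ k * exp (- t))))"
        using fs[OF t] c0 t by (intro suminf_ennreal_eq[symmetric]) auto
      also have "\<dots> = (\<Sum>k. ennreal (c k) * ennreal (t ^ k * exp (- t)))"
        using c0 t by (intro suminf_cong) (simp add: ennreal_mult)
      finally show ?thesis using True by simp
    qed simp
  qed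
  also have "\<dots> = (\<Sum>k. \<integral>\<^sup>+t. ennreal (c k) * (ennreal (t ^ k * exp (- t)) * indicator {0..l} t) \<partial>lborel)"
    by (rule nn_integral_suminf) measurable
  also have "\<dots> = (\<Sum>k. ennreal (w k))"
  proof (rule suminf_cong)
    fix k
    have "(\<integral>\<^sup>+t. ennreal (c k) * (ennreal (t ^ k * exp (- t)) * indicator {0..l} t) \<partial>lborel)
        = ennreal (c k) * ennreal (fact k * (1 - exp (- l) * Ek k l))"
      using l by (subst nn_integral_cmult) (auto simp: gamma_int)
    also have "\<dots> = ennreal (c k * (fact k * (1 - exp (- l) * Ek k l)))"
      using c0 l Ek_le[of l k] by (subst ennreal_mult) (auto simp: exp_minus field_simps)
    also have "c k * (fact k * (1 - exp (- l) * Ek k l)) = w k"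
      unfolding c_def w_def a_def by (simp add: power2_eq_square field_simps)
    finally show "(\<integral>\<^sup>+t. ennreal (c k) * (ennreal (t ^ k * exp (- t)) * indicator {0..l} t) \<partial>lborel) = ennreal (w k)" .
  qed
  also have "\<dots> = ennreal K0" using w0 ws by (rule suminf_ennreal_eq)
  finally have nn: "(\<integral>\<^sup>+t. ennreal (indicator {0..l} t * f t) \<partial>lborel) = ennreal K0" .
  have K00: "K0 \<ge> 0" using ws w0 by (metis sums_le sums_zero)
  have "((\<lambda>t. indicator {0..l} t * f t) has_integral K0) UNIV"
    by (rule nn_integral_has_integral) (use nn K00 f0 in \<open>auto simp: f_def indicator_def\<close>)
  moreover have "(\<lambda>t. indicator {0..l} t * f t) = (\<lambda>t. if t \<in> {0..l} then f t else 0)"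
    by (auto simp: fun_eq_iff indicator_def)
  ultimately have "((\<lambda>t. if t \<in> {0..l} then f t else 0) has_integral K0) UNIV"
    by (simp only:)
  then have "(f has_integral K0) {0..l}"
    by (simp only: has_integral_restrict_UNIV)
  then show ?thesis unfolding f_def K0 by (rule integral_unique)
qed


lemma supp_ge1:
  fixes n k :: nat
  assumes l: "l > 0" and x: "x \<in> set_pmf (Pi_pmf {..<n} 0 (\<lambda>_. ztp_pmf l))" and k: "k < n"
  shows "x k \<ge> 1"
proof -
  have "x \<in> PiE_dflt {..<n} 0 (set_pmf \<circ> (\<lambda>_. ztp_pmf l))"
    using x set_Pi_pmf[OF finite_lessThan[of n], of 0 "\<lambda>_. ztp_pmf l"] by simp
  hence "x k \<in> set_pmf (ztp_pmf l)" using k by (auto simp: PiE_dflt_def)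
  hence "pmf (ztp_pmf l) (x k) \<noteq> 0" by (simp add: set_pmf_eq)
  thus ?thesis by (cases "x k") (auto simp: ztp_pmf_eq[OF l])
qed

lemma int_rep:
  assumes S: "S \<ge> (1::nat)"
  shows "(\<integral>\<^sup>+y. ennreal (y ^ (S - 1)) * indicator {0..1} y \<partial>lborel) = ennreal (1 / real S)"
proof -
  have d: "((\<lambda>y. y ^ S / real S) has_real_derivative y ^ (S - 1)) (at y)" for y :: real
  proof -
    have "((\<lambda>y. y ^ S / real S) has_real_derivative (real S * y ^ (S - 1) / real S)) (at y)"
      by (rule DERIV_cdivide) (use DERIV_pow[of S y] in simp)
    then show ?thesis using S by simp
  qed
  have "(\<integral>\<^sup>+y. ennreal (y ^ (S - 1)) * indicator {0..1} y \<partial>lborel) = ennreal (1 ^ S / real S - 0 ^ S / real S)"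
    by (rule nn_integral_FTC_Icc[where F="\<lambda>y. y ^ S / real S"]) (use d in auto)
  moreover have "(0::real) ^ S = 0" using S by (simp add: power_0_left)
  ultimately show ?thesis by simp
qed

lemma gauss_real: "(\<Sum>j<n. real j) = real n * (real n - 1) / 2"
  by (induction n) (auto simp: field_simps)

lemma pairs_sum:
  fixes m :: real
  assumes "m \<ge> 0"
  shows "(\<Sum>j<n. \<Sum>i<j. ennreal m) = ennreal (m * (real n * (real n - 1) / 2))"
proof -
  have "(\<Sum>j<n. \<Sum>i<j. ennreal m) = (\<Sum>j<n. ennreal (real j * m))"
    using assms by (intro sum.cong) (auto simp: ennreal_mult ennreal_of_nat_eq_real_of_nat)
  also have "\<dots> = ennreal (\<Sum>j<n. real j * m)"
    using assms by (intro sum_ennreal) auto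
  also have "(\<Sum>j<n. real j * m) = m * (real n * (real n - 1) / 2)"
    by (subst sum_distrib_right[symmetric]) (simp add: gauss_real mult.commute)
  finally show ?thesis .
qed

lemma phi_aux: "(N::real) - 1 > 0 \<Longrightarrow> y > 0 \<Longrightarrow> 1 / ((N - 1) * y) * (m * (N * (N - 1) / 2)) = N / 2 * m / y"
  by (simp add: field_simps)

definition Phi :: "real \<Rightarrow> nat \<Rightarrow> real \<Rightarrow> real" where
  "Phi l n y = real n / 2 * (Qz (l * y) / (exp l - 1)^2 * ((exp (l * y) - 1) / (exp l - 1)) ^ (n - 2)) / y"

lemma inner_y:
  fixes n :: nat
  assumes l: "l > 0" and n: "n \<ge> 2" and y: "y > 0"
  shows "(\<integral>\<^sup>+x. ennreal ((\<Sum>j<n. \<Sum>i<j. \<bar>real (x i) - real (x j)\<bar>) / (real n - 1)) * ennreal (y ^ ((\<Sum>i<n. x i) - 1))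
           \<partial>Pi_pmf {..<n} 0 (\<lambda>_. ztp_pmf l)) = ennreal (Phi l n y)"
proof -
  let ?P = "Pi_pmf {..<n} 0 (\<lambda>_. ztp_pmf l)"
  define c where "c = 1 / ((real n - 1) * y)"
  have c0: "c \<ge> 0" unfolding c_def using n y by simp
  have pw: "ennreal ((\<Sum>j<n. \<Sum>i<j. \<bar>real (x i) - real (x j)\<bar>) / (real n - 1)) * ennreal (y ^ ((\<Sum>i<n. x i) - 1))
      = ennreal c * (\<Sum>j<n. \<Sum>i<j. ennreal \<bar>real (x i) - real (x j)\<bar> * (\<Prod>k\<in>{..<n}. ennreal (y ^ x k)))"
    if x: "x \<in> set_pmf ?P" for x
  proof -
    define S where "S = (\<Sum>i<n. x i)"
    have "x 0 \<ge> 1" using supp_ge1[OF l x, of 0] n by simp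
    moreover have "x 0 \<le> S" unfolding S_def using n by (intro member_le_sum) auto
    ultimately have S1: "S \<ge> 1" by simp
    have yS: "y ^ (S - 1) = y ^ S / y" using S1 y by (metis One_nat_def Suc_pred le_add_diff_inverse less_le_trans nonzero_mult_div_cancel_left not_one_le_zero power_Suc y less_numeral_extra(3) zero_less_one)
    have yP: "y ^ S = (\<Prod>k\<in>{..<n}. y ^ x k)" unfolding S_def by (rule power_sum)
    have "(\<Sum>j<n. \<Sum>i<j. \<bar>real (x i) - real (x j)\<bar>) / (real n - 1) * y ^ (S - 1)
        = c * (\<Sum>j<n. \<Sum>i<j. \<bar>real (x i) - real (x j)\<bar> * (\<Prod>k\<in>{..<n}. y ^ x k))"
    proof -
      have e1: "D / (real n - 1) * (Pr / y) = c * (D * Pr)" for D Pr :: real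
        unfolding c_def using n y by (simp add: field_simps)
      show ?thesis unfolding yS yP e1 by (simp only: sum_distrib_right)
    qed
    moreover have "ennreal ((\<Sum>j<n. \<Sum>i<j. \<bar>real (x i) - real (x j)\<bar>) / (real n - 1)) * ennreal (y ^ (S - 1))
        = ennreal ((\<Sum>j<n. \<Sum>i<j. \<bar>real (x i) - real (x j)\<bar>) / (real n - 1) * y ^ (S - 1))"
      using n y by (intro ennreal_mult[symmetric] divide_nonneg_nonneg sum_nonneg) auto
    moreover have "ennreal (c * (\<Sum>j<n. \<Sum>i<j. \<bar>real (x i) - real (x j)\<bar> * (\<Prod>k\<in>{..<n}. y ^ x k)))
        = ennreal c * (\<Sum>j<n. \<Sum>i<j. ennreal \<bar>real (x i) - real (x j)\<bar> * (\<Prod>k\<in>{..<n}. ennreal (y ^ x k)))"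
      using c0 y
      by (simp add: ennreal_mult sum_nonneg prod_nonneg sum_ennreal[symmetric] prod_ennreal)
    ultimately show ?thesis unfolding S_def by simp
  qed
  have "(\<integral>\<^sup>+x. ennreal ((\<Sum>j<n. \<Sum>i<j. \<bar>real (x i) - real (x j)\<bar>) / (real n - 1)) * ennreal (y ^ ((\<Sum>i<n. x i) - 1)) \<partial>?P)
      = (\<integral>\<^sup>+x. ennreal c * (\<Sum>j<n. \<Sum>i<j. ennreal \<bar>real (x i) - real (x j)\<bar> * (\<Prod>k\<in>{..<n}. ennreal (y ^ x k))) \<partial>?P)"
    by (intro nn_integral_cong_AE) (use AE_measure_pmf[of ?P] pw in \<open>auto elim!: AE_mp\<close>)
  also have "\<dots> = ennreal c * (\<Sum>j<n. \<Sum>i<j. \<integral>\<^sup>+x. ennreal \<bar>real (x i) - real (x j)\<bar> * (\<Prod>k\<in>{..<n}. ennreal (y ^ x k)) \<partial>?P)"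
    by (simp add: nn_integral_cmult nn_integral_sum)
  also have "\<dots> = ennreal c * (\<Sum>j<n. \<Sum>i<j. ennreal (Qz (l * y) / (exp l - 1)^2 * ((exp (l * y) - 1) / (exp l - 1)) ^ (n - 2)))"
  proof -
    have el: "exp l - 1 > 0" using l by simp
    have g0: "(exp (l * y) - 1) / (exp l - 1) \<ge> 0" using l y el by simp
    have q0: "Qz (l * y) / (exp l - 1)^2 \<ge> 0" using DS1(2)[of "l * y"] l y by simp
    have M: "(\<integral>\<^sup>+a. \<integral>\<^sup>+b. ennreal \<bar>real a - real b\<bar> * ennreal (y ^ a) * ennreal (y ^ b) \<partial>ztp_pmf l \<partial>ztp_pmf l)
        = ennreal (Qz (l * y) / (exp l - 1)^2)"
    proof -
      have "(\<integral>\<^sup>+a. \<integral>\<^sup>+b. ennreal \<bar>real a - real b\<bar> * ennreal (y ^ a) * ennreal (y ^ b) \<partial>ztp_pmf l \<partial>ztp_pmf l)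
          = (\<integral>\<^sup>+a. \<integral>\<^sup>+b. ennreal (\<bar>real a - real b\<bar> * y ^ a * y ^ b) \<partial>ztp_pmf l \<partial>ztp_pmf l)"
        using y by (simp add: ennreal_mult)
      also have "\<dots> = ennreal (Qz (l * y) / (exp l - 1)^2)" using l y by (intro Mfun) auto
      finally show ?thesis .
    qed
    have pt: "(\<integral>\<^sup>+x. ennreal \<bar>real (x i) - real (x j)\<bar> * (\<Prod>k\<in>{..<n}. ennreal (y ^ x k)) \<partial>?P)
        = ennreal (Qz (l * y) / (exp l - 1)^2 * ((exp (l * y) - 1) / (exp l - 1)) ^ (n - 2))"
      if ij: "i < j" "j < n" for i j
    proof -
      have "(\<integral>\<^sup>+x. ennreal \<bar>real (x i) - real (x j)\<bar> * (\<Prod>k\<in>{..<n}. ennreal (y ^ x k)) \<partial>?P)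
          = ennreal (Qz (l * y) / (exp l - 1)^2) * ennreal ((exp (l * y) - 1) / (exp l - 1)) ^ (n - 2)"
        using pair_term[of "{..<n}" i j "ztp_pmf l" y] ij unfolding M gfun[OF l less_imp_le[OF y]] by simp
      also have "\<dots> = ennreal (Qz (l * y) / (exp l - 1)^2) * ennreal (((exp (l * y) - 1) / (exp l - 1)) ^ (n - 2))"
        using g0 by (simp add: ennreal_power)
      also have "\<dots> = ennreal (Qz (l * y) / (exp l - 1)^2 * ((exp (l * y) - 1) / (exp l - 1)) ^ (n - 2))"
        by (rule ennreal_mult[symmetric, OF q0 zero_le_power[OF g0]])
      finally show ?thesis .
    qed
    show ?thesis by (intro arg_cong[where f="\<lambda>t. ennreal c * t"] sum.cong refl) (simp add: pt)
  qed
  also have "\<dots> = ennreal c * ennreal ((Qz (l * y) / (exp l - 1)^2 * ((exp (l * y) - 1) / (exp l - 1)) ^ (n - 2)) * (real n * (real n - 1) / 2))"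
  proof -
    have "Qz (l * y) / (exp l - 1)^2 * ((exp (l * y) - 1) / (exp l - 1)) ^ (n - 2) \<ge> 0"
      using DS1(2)[of "l * y"] l y by simp
    then show ?thesis by (subst pairs_sum) auto
  qed
  also have "\<dots> = ennreal (Phi l n y)"
  proof -
    have "(real n - 1) > 0" using n by simp
    then have "c * ((Qz (l * y) / (exp l - 1)^2 * ((exp (l * y) - 1) / (exp l - 1)) ^ (n - 2)) * (real n * (real n - 1) / 2)) = Phi l n y"
      unfolding c_def Phi_def using y by (intro phi_aux) auto
    moreover have "(Qz (l * y) / (exp l - 1)^2 * ((exp (l * y) - 1) / (exp l - 1)) ^ (n - 2)) * (real n * (real n - 1) / 2) \<ge> 0"
      using DS1(2)[of "l * y"] l y n by simp
    ultimately show ?thesis using c0 by (simp add: ennreal_mult[symmetric])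
  qed
  finally show ?thesis .
qed


lemma EG_nn:
  fixes n :: nat
  assumes l: "l > 0" and n: "n \<ge> 2"
  shows "(\<integral>\<^sup>+x. ennreal (gini_hat n x) \<partial>Pi_pmf {..<n} 0 (\<lambda>_. ztp_pmf l))
       = (\<integral>\<^sup>+y. ennreal (Phi l n y) * indicator {0..1} y \<partial>lborel)"
proof -
  let ?P = "Pi_pmf {..<n} 0 (\<lambda>_. ztp_pmf l)"
  define Dx where "Dx x = (\<Sum>j<n. \<Sum>i<j. \<bar>real (x i) - real (x j)\<bar>)" for x :: "nat \<Rightarrow> nat"
  define Sx where "Sx x = (\<Sum>i<n. x i)" for x :: "nat \<Rightarrow> nat"
  define H where "H x y = ennreal (Dx x / (real n - 1)) * (ennreal (y ^ (Sx x - 1)) * indicator {0..1} y)"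
    for x :: "nat \<Rightarrow> nat" and y :: real
  have step1: "ennreal (gini_hat n x) = (\<integral>\<^sup>+y. H x y \<partial>lborel)" if x: "x \<in> set_pmf ?P" for x
  proof -
    have "x 0 \<ge> 1" using supp_ge1[OF l x, of 0] n by simp
    moreover have "x 0 \<le> Sx x" unfolding Sx_def using n by (intro member_le_sum) auto
    ultimately have S1: "Sx x \<ge> 1" by simp
    have D0: "Dx x / (real n - 1) \<ge> 0" unfolding Dx_def using n by (intro divide_nonneg_nonneg sum_nonneg) auto
    have "gini_hat n x = Dx x / (real n - 1) * (1 / real (Sx x))"
      unfolding gini_hat_def Dx_def Sx_def by (simp add: of_nat_sum)
    hence "ennreal (gini_hat n x) = ennreal (Dx x / (real n - 1) * (1 / real (Sx x)))"
      by (simp only:)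
    also have "\<dots> = ennreal (Dx x / (real n - 1)) * ennreal (1 / real (Sx x))"
      by (rule ennreal_mult[OF D0]) simp
    also have "\<dots> = ennreal (Dx x / (real n - 1)) * (\<integral>\<^sup>+y. ennreal (y ^ (Sx x - 1)) * indicator {0..1} y \<partial>lborel)"
      by (subst int_rep[OF S1]) (rule refl)
    also have "\<dots> = (\<integral>\<^sup>+y. H x y \<partial>lborel)"
      unfolding H_def by (rule nn_integral_cmult[symmetric]) measurable
    finally show ?thesis .
  qed
  have "(\<integral>\<^sup>+x. ennreal (gini_hat n x) \<partial>?P) = (\<integral>\<^sup>+x. \<integral>\<^sup>+y. H x y \<partial>lborel \<partial>?P)"
    by (intro nn_integral_cong_AE) (use AE_measure_pmf[of ?P] step1 in \<open>auto elim!: AE_mp\<close>)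
  also have "\<dots> = (\<integral>\<^sup>+y. \<integral>\<^sup>+x. H x y \<partial>?P \<partial>lborel)"
  proof -
    interpret pair_sigma_finite "measure_pmf ?P" lborel
      by (intro pair_sigma_finite.intro prob_space_imp_sigma_finite measure_pmf.prob_space_axioms
          lborel.sigma_finite_measure_axioms)
    have m1: "(\<lambda>p. ennreal (Dx (fst p) / (real n - 1))) \<in> borel_measurable (measure_pmf ?P \<Otimes>\<^sub>M (lborel :: real measure))"
      by (rule measurable_compose[OF measurable_fst]) simp
    have m2: "(\<lambda>p. ennreal (snd p ^ (Sx (fst p) - 1))) \<in> borel_measurable (measure_pmf ?P \<Otimes>\<^sub>M (lborel :: real measure))"
    proof (rule measurable_compose_countable[where f="\<lambda>k p. ennreal (snd p ^ k)" and g="\<lambda>p. Sx (fst p) - 1"])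
      show "(\<lambda>p. Sx (fst p) - 1) \<in> measurable (measure_pmf ?P \<Otimes>\<^sub>M (lborel :: real measure)) (count_space UNIV)"
        by (rule measurable_compose[OF measurable_fst]) simp
    qed measurable
    have m3: "(\<lambda>p. indicator {0..1} (snd p) :: ennreal) \<in> borel_measurable (measure_pmf ?P \<Otimes>\<^sub>M (lborel :: real measure))"
      by measurable
    have "case_prod H \<in> borel_measurable (measure_pmf ?P \<Otimes>\<^sub>M (lborel :: real measure))"
      unfolding H_def case_prod_beta' using m1 m2 m3 by measurable
    then show ?thesis by (rule Fubini'[symmetric])
  qed
  also have "\<dots> = (\<integral>\<^sup>+y. ennreal (Phi l n y) * indicator {0..1} y \<partial>lborel)"
  proof (rule nn_integral_cong_AE)
    show "AE y in lborel. (\<integral>\<^sup>+x. H x y \<partial>?P) = ennreal (Phi l n y) * indicator {0..1} y"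
      using AE_lborel_singleton[of 0]
    proof (rule AE_mp, intro AE_I2 impI)
      fix y :: real assume y0: "y \<noteq> 0"
      show "(\<integral>\<^sup>+x. H x y \<partial>?P) = ennreal (Phi l n y) * indicator {0..1} y"
      proof (cases "y \<in> {0..1}")
        case True
        then have y: "y > 0" using y0 by auto
        have "(\<integral>\<^sup>+x. H x y \<partial>?P) = (\<integral>\<^sup>+x. ennreal (Dx x / (real n - 1)) * ennreal (y ^ (Sx x - 1)) \<partial>?P)"
          unfolding H_def using True by simp
        also have "\<dots> = ennreal (Phi l n y)"
          unfolding Dx_def Sx_def by (rule inner_y[OF l n y])
        finally show ?thesis using True by simp
      next
        case False then show ?thesis by (simp add: H_def)
      qed
    qed
  qed
  finally show ?thesis .
qed


lemma gini_hat_bounds: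
  fixes n :: nat
  assumes n: "n \<ge> 2"
  shows "gini_hat n x \<ge> 0" "gini_hat n x \<le> real n * real n"
proof -
  define S where "S = (\<Sum>i<n. real (x i))"
  define D where "D = (\<Sum>j<n. \<Sum>i<j. \<bar>real (x i) - real (x j)\<bar>)"
  have S0: "S \<ge> 0" unfolding S_def by (simp add: sum_nonneg)
  have D0: "D \<ge> 0" unfolding D_def by (simp add: sum_nonneg)
  have g: "gini_hat n x = 1 / (real n - 1) * (D / S)" unfolding gini_hat_def S_def D_def ..
  have n1: "real n - 1 \<ge> 1" using n by simp
  show "gini_hat n x \<ge> 0" unfolding g using n1 S0 D0 by simp
  have xle: "real (x i) \<le> S" if "i < n" for i
    unfolding S_def using that by (intro member_le_sum) auto
  have "D \<le> (\<Sum>j<n. \<Sum>i<n. S)"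
    unfolding D_def
  proof (rule sum_mono)
    fix j assume j: "j \<in> {..<n}"
    have "(\<Sum>i<j. \<bar>real (x i) - real (x j)\<bar>) \<le> (\<Sum>i<j. S)"
    proof (rule sum_mono)
      fix i assume "i \<in> {..<j}"
      then have "real (x i) \<le> S" "real (x j) \<le> S" using j xle by auto
      then show "\<bar>real (x i) - real (x j)\<bar> \<le> S" by auto
    qed
    also have "\<dots> \<le> (\<Sum>i<n. S)" using j S0 by (intro sum_mono2) auto
    finally show "(\<Sum>i<j. \<bar>real (x i) - real (x j)\<bar>) \<le> (\<Sum>i<n. S)" .
  qed
  also have "\<dots> = real n * real n * S" by simp
  finally have DS: "D \<le> real n * real n * S" .
  show "gini_hat n x \<le> real n * real n"
  proof (cases "S = 0")
    case True
    have "gini_hat n x = 0" unfolding g True by simp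
    then show ?thesis by simp
  next
    case False
    then have "S > 0" using S0 by simp
    then have a: "D / S \<le> real n * real n" using DS by (simp add: pos_divide_le_eq)
    have b: "1 / (real n - 1) \<le> 1" using n1 by simp
    have "1 / (real n - 1) * (D / S) \<le> D / S"
      by (rule mult_left_le_one_le) (use b n1 D0 \<open>S > 0\<close> in auto)
    then show ?thesis unfolding g using a by linarith
  qed
qed

lemma Phi_nonneg: "l > 0 \<Longrightarrow> y \<ge> 0 \<Longrightarrow> Phi l n y \<ge> 0"
  unfolding Phi_def using DS1(2)[of "l * y"] by (intro divide_nonneg_nonneg mult_nonneg_nonneg zero_le_power) auto

lemma Phi_measurable[measurable]: "Phi l n \<in> borel_measurable borel"
  unfolding Phi_def Qz_def by measurable

lemma EG_has_integral:
  fixes n :: nat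
  assumes l: "l > 0" and n: "n \<ge> 2"
  shows "(Phi l n has_integral measure_pmf.expectation (Pi_pmf {..<n} 0 (\<lambda>_. ztp_pmf l)) (gini_hat n)) {0..1}"
proof -
  let ?P = "Pi_pmf {..<n} 0 (\<lambda>_. ztp_pmf l)"
  let ?X = "\<integral>\<^sup>+x. ennreal (gini_hat n x) \<partial>?P"
  have EG: "measure_pmf.expectation ?P (gini_hat n) = enn2real ?X"
    by (rule integral_eq_nn_integral) (use gini_hat_bounds(1)[OF n] in auto)
  have "?X \<le> (\<integral>\<^sup>+x. ennreal (real n * real n) \<partial>?P)"
    by (intro nn_integral_mono) (use gini_hat_bounds(2)[OF n] in auto)
  also have "\<dots> = ennreal (real n * real n)" by (simp add: measure_pmf.emeasure_space_1)
  finally have Xfin: "?X < top" by (rule le_less_trans) simp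
  then obtain r where r: "?X = ennreal r" "r \<ge> 0" by (cases ?X rule: ennreal_cases) auto
  have "((\<lambda>y. indicator {0..1} y * Phi l n y) has_integral r) UNIV"
  proof (rule nn_integral_has_integral)
    show "(\<lambda>y. indicator {0..1} y * Phi l n y) \<in> borel_measurable borel" by measurable
    show "0 \<le> indicator {0..1} y * Phi l n y" for y
      using Phi_nonneg[OF l, of y] by (auto simp: indicator_def)
    have "(\<integral>\<^sup>+y. ennreal (indicator {0..1} y * Phi l n y) \<partial>lborel) = (\<integral>\<^sup>+y. ennreal (Phi l n y) * indicator {0..1} y \<partial>lborel)"
      by (intro nn_integral_cong) (auto simp: indicator_def)
    also have "\<dots> = ?X" by (rule EG_nn[OF l n, symmetric])
    finally show "(\<integral>\<^sup>+y. ennreal (indicator {0..1} y * Phi l n y) \<partial>lborel) = ennreal r" using r by simp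
  qed (use r in auto)
  moreover have "(\<lambda>y. indicator {0..1} y * Phi l n y) = (\<lambda>y. if y \<in> {0..1} then Phi l n y else 0)"
    by (auto simp: fun_eq_iff indicator_def)
  ultimately have "((\<lambda>y. if y \<in> {0..1} then Phi l n y else 0) has_integral r) UNIV" by (simp only:)
  then have "(Phi l n has_integral r) {0..1}" by (simp only: has_integral_restrict_UNIV)
  moreover have "measure_pmf.expectation ?P (gini_hat n) = r" using EG r by simp
  ultimately show ?thesis by simp
qed


lemma phi_split_aux:
  fixes E u ey Bs l y N :: real
  assumes "y > 0" "E > 0"
  shows "N / 2 * ((2 * (l * y) * Bs - 2 * (l * y) * ey) / E ^ 2 * (u ^ q / E ^ q)) / y
       = N * l / (E ^ 2 * E ^ q) * (Bs * u ^ q) - N * l / (E ^ 2 * E ^ q) * (ey * u ^ q)"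
  using assms by (simp add: field_simps)

lemma Ef_integral:
  fixes n :: nat and l :: real
  assumes l: "l > 0" and n: "n \<ge> 2"
  shows "((\<lambda>y. exp (l * y) * (exp (l * y) - 1) ^ (n - 2)) has_integral ((exp l - 1) ^ (n - 1) / ((real n - 1) * l))) {0..1}"
proof -
  define F where "F y = (exp (l * y) - 1) ^ (n - 1) / ((real n - 1) * l)" for y
  have d: "(F has_real_derivative exp (l * y) * (exp (l * y) - 1) ^ (n - 2)) (at y)" for y
  proof -
    have e: "((\<lambda>y. exp (l * y) - 1) has_real_derivative exp (l * y) * l) (at y)"
      by (auto intro!: derivative_eq_intros)
    have "((\<lambda>y. (exp (l * y) - 1) ^ (n - 1)) has_real_derivative
          of_nat (n - 1) * (exp (l * y) * l * (exp (l * y) - 1) ^ (n - 1 - Suc 0))) (at y)"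
      by (rule DERIV_power[OF e])
    then have "(F has_real_derivative of_nat (n - 1) * (exp (l * y) * l * (exp (l * y) - 1) ^ (n - 1 - Suc 0)) / ((real n - 1) * l)) (at y)"
      unfolding F_def by (rule DERIV_cdivide)
    moreover have "of_nat (n - 1) * (exp (l * y) * l * (exp (l * y) - 1) ^ (n - 1 - Suc 0)) / ((real n - 1) * l)
        = exp (l * y) * (exp (l * y) - 1) ^ (n - 2)"
    proof -
      have "n - 1 - Suc 0 = n - 2" by simp
      moreover have "real (n - 1) = real n - 1" using n by simp
      moreover have "real n - 1 > 0" using n by simp
      ultimately show ?thesis using l by (simp add: field_simps)
    qed
    ultimately show ?thesis by simp
  qed
  have "((\<lambda>y. exp (l * y) * (exp (l * y) - 1) ^ (n - 2)) has_integral (F 1 - F 0)) {0..1}"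
    by (rule fundamental_theorem_of_calculus)
       (auto intro!: DERIV_subset[OF d] simp: has_real_derivative_iff_has_vector_derivative[symmetric])
  moreover have "F 1 - F 0 = (exp l - 1) ^ (n - 1) / ((real n - 1) * l)"
    unfolding F_def using n by simp
  ultimately show ?thesis by simp
qed

lemma EG_formula:
  fixes n :: nat and l :: real
  assumes l: "l > 0" and n: "n \<ge> 2"
  shows "measure_pmf.expectation (Pi_pmf {..<n} 0 (\<lambda>_. ztp_pmf l)) (gini_hat n)
       = n * l / (exp l - 1) ^ n * integral {0..1} (\<lambda>y. (bessel_I 0 (2 * l * y) + bessel_I 1 (2 * l * y))
                                    * (exp (l * y) - 1) ^ (n - 2))
         - n / ((real n - 1) * (exp l - 1))"
proof -
  define EG where "EG = measure_pmf.expectation (Pi_pmf {..<n} 0 (\<lambda>_. ztp_pmf l)) (gini_hat n)"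
  define E where "E = exp l - 1"
  have E: "E > 0" unfolding E_def using l by simp
  define A where "A = real n * l / E ^ n"
  have A: "A > 0" unfolding A_def using l n E by simp
  define Bf where "Bf y = (bessel_I 0 (2 * l * y) + bessel_I 1 (2 * l * y)) * (exp (l * y) - 1) ^ (n - 2)" for y
  define Ef where "Ef y = exp (l * y) * (exp (l * y) - 1) ^ (n - 2)" for y
  have En: "E ^ n = E ^ 2 * E ^ (n - 2)"
  proof -
    have "n = 2 + (n - 2)" using n by simp
    then have "E ^ n = E ^ (2 + (n - 2))" by (rule arg_cong)
    then show ?thesis by (simp only: power_add)
  qed
  have phi: "Phi l n y = A * Bf y - A * Ef y" if y: "y \<in> {0..1} - {0}" for y
  proof -
    have y0: "y > 0" using y by auto
    have "Phi l n y = real n / 2 * ((2 * (l * y) * (bessel_I 0 (2 * (l * y)) + bessel_I 1 (2 * (l * y)))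
             - 2 * (l * y) * exp (l * y)) / E ^ 2 * ((exp (l * y) - 1) ^ (n - 2) / E ^ (n - 2))) / y"
      unfolding Phi_def Qz_def E_def by (simp add: power_divide)
    also have "\<dots> = real n * l / (E ^ 2 * E ^ (n - 2)) * ((bessel_I 0 (2 * (l * y)) + bessel_I 1 (2 * (l * y))) * (exp (l * y) - 1) ^ (n - 2))
        - real n * l / (E ^ 2 * E ^ (n - 2)) * (exp (l * y) * (exp (l * y) - 1) ^ (n - 2))"
      by (rule phi_split_aux) (use y0 E in auto)
    also have "\<dots> = A * Bf y - A * Ef y"
      unfolding A_def Bf_def Ef_def En by (simp add: mult.assoc)
    finally show ?thesis .
  qed
  have h1: "((\<lambda>y. A * Bf y - A * Ef y) has_integral EG) {0..1}"
    by (rule has_integral_spike[OF negligible_sing[of 0] _ EG_has_integral[OF l n, folded EG_def]])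
       (use phi in auto)
  have h2: "((\<lambda>y. A * Ef y) has_integral (A * ((exp l - 1) ^ (n - 1) / ((real n - 1) * l)))) {0..1}"
    unfolding Ef_def by (rule has_integral_mult_right[OF Ef_integral[OF l n]])
  have h3: "((\<lambda>y. (A * Bf y - A * Ef y) + A * Ef y) has_integral (EG + A * ((exp l - 1) ^ (n - 1) / ((real n - 1) * l)))) {0..1}"
    by (rule has_integral_add[OF h1 h2])
  have h4: "((\<lambda>y. (1 / A) * ((A * Bf y - A * Ef y) + A * Ef y)) has_integral
        ((1 / A) * (EG + A * ((exp l - 1) ^ (n - 1) / ((real n - 1) * l))))) {0..1}"
    by (rule has_integral_mult_right[OF h3])
  have "(\<lambda>y. (1 / A) * ((A * Bf y - A * Ef y) + A * Ef y)) = Bf" using A by (auto simp: fun_eq_iff)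
  then have J: "integral {0..1} Bf = (1 / A) * (EG + A * ((exp l - 1) ^ (n - 1) / ((real n - 1) * l)))"
    using h4 by (simp add: integral_unique)
  have G2: "A * ((exp l - 1) ^ (n - 1) / ((real n - 1) * l)) = n / ((real n - 1) * (exp l - 1))"
  proof -
    have "E ^ n = E * E ^ (n - 1)" using n by (simp flip: power_Suc)
    moreover have "real n - 1 > 0" using n by simp
    ultimately show ?thesis unfolding A_def E_def[symmetric] using l E by (simp add: field_simps)
  qed
  have "EG = A * integral {0..1} Bf - n / ((real n - 1) * (exp l - 1))"
    unfolding J G2[symmetric] using A by (simp add: field_simps)
  then show ?thesis unfolding EG_def A_def E_def Bf_def .
qed


lemma gini_alg:
  fixes d l B x :: real
  assumes d: "d > 0" and l: "l > 0" and x: "x > 0"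
  shows "1 / 2 * ((2 * l * B - 2 * l * x) / d ^ 2) / (l * x / d) = (B - x) / (x * d)"
  using d l x by (simp add: field_simps power2_eq_square)

lemma gini_ztp:
  fixes l :: real
  assumes l: "l > 0"
  shows "gini (ztp_pmf l) = ((bessel_I 0 (2 * l) + bessel_I 1 (2 * l)) - exp l) / (exp l * (exp l - 1))"
proof -
  have el: "exp l - 1 > 0" using l by simp
  have Q0: "Qz l \<ge> 0" using DS1(2)[of l] l by simp
  have e1: "measure_pmf.expectation (pair_pmf (ztp_pmf l) (ztp_pmf l)) (\<lambda>(a, b). \<bar>real a - real b\<bar>)
      = Qz l / (exp l - 1) ^ 2"
  proof -
    have "measure_pmf.expectation (pair_pmf (ztp_pmf l) (ztp_pmf l)) (\<lambda>(a, b). \<bar>real a - real b\<bar>)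
        = enn2real (\<integral>\<^sup>+p. ennreal ((\<lambda>(a, b). \<bar>real a - real b\<bar>) p) \<partial>pair_pmf (ztp_pmf l) (ztp_pmf l))"
      by (rule integral_eq_nn_integral) auto
    also have "(\<integral>\<^sup>+p. ennreal ((\<lambda>(a, b). \<bar>real a - real b\<bar>) p) \<partial>pair_pmf (ztp_pmf l) (ztp_pmf l))
        = (\<integral>\<^sup>+a. \<integral>\<^sup>+b. ennreal (\<bar>real a - real b\<bar> * 1 ^ a * 1 ^ b) \<partial>ztp_pmf l \<partial>ztp_pmf l)"
      by (simp add: nn_integral_pair_pmf')
    also have "\<dots> = ennreal (Qz (l * 1) / (exp l - 1) ^ 2)" by (rule Mfun[OF l]) simp
    finally show ?thesis using Q0 el by simp
  qed
  have e2: "measure_pmf.expectation (ztp_pmf l) real = l * exp l / (exp l - 1)"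
  proof -
    have "measure_pmf.expectation (ztp_pmf l) real = enn2real (\<integral>\<^sup>+k. ennreal (real k) \<partial>ztp_pmf l)"
      by (rule integral_eq_nn_integral) auto
    also have "\<dots> = l * exp l / (exp l - 1)" using meanfun[OF l] l el by simp
    finally show ?thesis .
  qed
  have "gini (ztp_pmf l) = 1 / 2 * (Qz l / (exp l - 1) ^ 2) / (l * exp l / (exp l - 1))"
    unfolding gini_def e1 e2 ..
  also have "\<dots> = ((bessel_I 0 (2 * l) + bessel_I 1 (2 * l)) - exp l) / (exp l * (exp l - 1))"
    unfolding Qz_def by (rule gini_alg[OF el l]) simp
  finally show ?thesis .
qed

lemma final_alg:
  fixes x I0 I1 :: real
  assumes x: "x > 1"
  shows "2 * (1 / x) / (1 - 1 / x) * ((x - (1 / x) * I0) / 2) - (1 / x ^ 2) / (1 - 1 / x) * I1 - 1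
       = - (((I0 + I1) - x) / (x * (x - 1)))"
proof -
  define d where "d = x - 1"
  have d: "d > 0" "x > 0" using x by (auto simp: d_def)
  have h: "1 - 1 / x = d / x" using d by (simp add: d_def field_simps)
  have h2: "x - 1 = d" by (simp add: d_def)
  have h3: "x * x - x * d = x" by (simp add: d_def algebra_simps)
  have "2 * (1 / x) / (1 - 1 / x) * ((x - (1 / x) * I0) / 2) - (1 / x ^ 2) / (1 - 1 / x) * I1 - 1
      = 2 * (1 / x) / (d / x) * ((x - (1 / x) * I0) / 2) - (1 / x ^ 2) / (d / x) * I1 - 1"
    unfolding h ..
  also have "\<dots> = (x * x - I0 - I1 - x * d) / (x * d)"
    using d by (simp add: field_simps power2_eq_square)
  also have "x * x - I0 - I1 - x * d = - ((I0 + I1) - x)" using h3 by linarith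
  also have "(- ((I0 + I1) - x)) / (x * d) = - (((I0 + I1) - x) / (x * d))" by (rule minus_divide_left[symmetric])
  finally show ?thesis unfolding h2 .
qed


lemma lin_aux: "(E::real) = a - t \<Longrightarrow> b - c - 1 = - g \<Longrightarrow> E - g = a - t + b - c - 1"
  by simp

theorem mainTheorem8:
  fixes l :: real and n :: nat
  assumes "l > 0" and "n \<ge> 2"
  defines "EG \<equiv> measure_pmf.expectation (Pi_pmf {..<n} 0 (\<lambda>_. ztp_pmf l)) (gini_hat n)"
  defines "J \<equiv> integral {0..1} (\<lambda>y. (bessel_I 0 (2 * l * y) + bessel_I 1 (2 * l * y))
                                    * (exp (l * y) - 1) ^ (n - 2))"
  shows "(EG = n * l * exp (- (real n * l)) / (1 - exp (- l)) ^ n * J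
              - n * exp (- l) / ((n - 1) * (1 - exp (- l))))
         \<and> (EG - gini (ztp_pmf l) =
           n * l * exp (- (real n * l)) / (1 - exp (- l)) ^ n * J
           - n * exp (- l) / ((n - 1) * (1 - exp (- l)))
           + 2 * exp (- l) / (1 - exp (- l)) *
               integral {0..l} (\<lambda>t. bessel_I 0 (2 * sqrt (l * t)) * exp (- t))
           - exp (- 2 * l) / (1 - exp (- l)) * bessel_I 1 (2 * l) - 1)"
proof -
  note l = assms(1) and n = assms(2)
  define x where "x = exp l"
  have x: "x > 1" unfolding x_def using l by simp
  have em: "exp (- l) = 1 / x" unfolding x_def by (simp add: exp_minus field_simps)
  have em2: "exp (- 2 * l) = 1 / x ^ 2"
  proof -
    have "exp (2 * l) = x ^ 2" unfolding x_def by (simp add: power2_eq_square flip: exp_add)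
    then show ?thesis by (simp add: exp_minus inverse_eq_divide)
  qed
  have emn: "exp (- (real n * l)) = 1 / x ^ n"
    unfolding x_def by (simp add: exp_minus exp_of_nat_mult inverse_eq_divide)
  have om: "1 - 1 / x = (x - 1) / x" using x by (simp add: field_simps)
  have A: "real n * l * exp (- (real n * l)) / (1 - exp (- l)) ^ n = real n * l / (x - 1) ^ n"
    unfolding emn em om using x by (simp add: power_divide)
  have n1: "real (n - 1) = real n - 1" using n by simp
  have T2: "real n * exp (- l) / ((real n - 1) * (1 - exp (- l))) = real n / ((real n - 1) * (x - 1))"
    unfolding em om using x by simp
  have EGf: "EG = real n * l / (x - 1) ^ n * J - real n / ((real n - 1) * (x - 1))"
    unfolding EG_def J_def x_def by (rule EG_formula[OF l n])
  have P1: "EG = n * l * exp (- (real n * l)) / (1 - exp (- l)) ^ n * J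
              - n * exp (- l) / ((n - 1) * (1 - exp (- l)))"
    using EGf A T2 n1 by simp
  have K: "integral {0..l} (\<lambda>t. bessel_I 0 (2 * sqrt (l * t)) * exp (- t)) = (x - 1 / x * bessel_I 0 (2 * l)) / 2"
    unfolding K_int[OF l] em x_def ..
  have G: "gini (ztp_pmf l) = ((bessel_I 0 (2 * l) + bessel_I 1 (2 * l)) - x) / (x * (x - 1))"
    unfolding gini_ztp[OF l] x_def ..
  have "2 * exp (- l) / (1 - exp (- l)) * integral {0..l} (\<lambda>t. bessel_I 0 (2 * sqrt (l * t)) * exp (- t))
           - exp (- 2 * l) / (1 - exp (- l)) * bessel_I 1 (2 * l) - 1 = - gini (ztp_pmf l)" (is "?u = _")
    unfolding K em em2 G by (rule final_alg[OF x])
  note hh = this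
  have P2: "EG - gini (ztp_pmf l) =
           n * l * exp (- (real n * l)) / (1 - exp (- l)) ^ n * J
           - n * exp (- l) / ((n - 1) * (1 - exp (- l)))
           + 2 * exp (- l) / (1 - exp (- l)) *
               integral {0..l} (\<lambda>t. bessel_I 0 (2 * sqrt (l * t)) * exp (- t))
           - exp (- 2 * l) / (1 - exp (- l)) * bessel_I 1 (2 * l) - 1"
    by (rule lin_aux[OF P1 hh])
  show ?thesis using P1 P2 by blast
qed


end
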